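(* For every $g\in\mathrm{Sp}(2,1)$, the set of traces of the elements of $g\,\mathrm{SU}(2,1)\,g^{-1}$ is not contained in $\mathbb R$.
   Context: $\mathbb H$ denotes the quaternions. $\mathrm{Sp}(2,1)=\{A\in\mathrm{GL}(3,\mathbb H): A^*I_{2,1}A=I_{2,1}\}$ with $A^*$ the conjugate transpose and $I_{2,1}=\mathrm{diag}(1,1,-1)$. $\mathrm{SU}(2,1)\subset\mathrm{Sp}(2,1)$ is the subgroup of complex matrices of determinant $1$ preserving $I_{2,1}$. The trace of a quaternionic matrix is the sum of its diagonal entries. *)

theory Defs
  imports Complex_Main
begin

datatype quat = Quat (qre: real) (qi: real) (qj: real) (qk: real)

definition qadd :: "quat \<Rightarrow> quat \<Rightarrow> quat" where
  "qadd p q = Quat (qre p + qre q) (qi p + qi q) (qj p + qj q) (qk p + qk q)"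

definition qmult :: "quat \<Rightarrow> quat \<Rightarrow> quat" where
  "qmult p q = Quat
     (qre p * qre q - qi p * qi q - qj p * qj q - qk p * qk q)
     (qre p * qi q + qi p * qre q + qj p * qk q - qk p * qj q)
     (qre p * qj q - qi p * qk q + qj p * qre q + qk p * qi q)
     (qre p * qk q + qi p * qj q - qj p * qi q + qk p * qre q)"

definition qcnj :: "quat \<Rightarrow> quat" where
  "qcnj q = Quat (qre q) (- qi q) (- qj q) (- qk q)"

definition qof_real :: "real \<Rightarrow> quat" where
  "qof_real r = Quat r 0 0 0"

definition qof_complex :: "complex \<Rightarrow> quat" where
  "qof_complex z = Quat (Re z) (Im z) 0 0"

definition q_is_real :: "quat \<Rightarrow> bool" where
  "q_is_real q \<longleftrightarrow> q \<in> range qof_real"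

definition q_is_complex :: "quat \<Rightarrow> bool" where
  "q_is_complex q \<longleftrightarrow> q \<in> range qof_complex"

type_synonym qmat = "nat \<Rightarrow> nat \<Rightarrow> quat"

text \<open>Only entries with indices < 3 are meaningful; equality of matrices is entrywise on them.\<close>
definition qmat_eq :: "qmat \<Rightarrow> qmat \<Rightarrow> bool" where
  "qmat_eq A B \<longleftrightarrow> (\<forall>i<3. \<forall>j<3. A i j = B i j)"

definition qmat_mult :: "qmat \<Rightarrow> qmat \<Rightarrow> qmat" where
  "qmat_mult A B = (\<lambda>i j. qadd (qmult (A i 0) (B 0 j))
                         (qadd (qmult (A i 1) (B 1 j)) (qmult (A i 2) (B 2 j))))"

definition qmat_adj :: "qmat \<Rightarrow> qmat" where
  "qmat_adj A = (\<lambda>i j. qcnj (A j i))"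

definition qmat_one :: qmat where
  "qmat_one = (\<lambda>i j. if i = j then qof_real 1 else qof_real 0)"

definition I21 :: qmat where
  "I21 = (\<lambda>i j. if i = j then (if i = 2 then qof_real (-1) else qof_real 1) else qof_real 0)"

definition qmat_trace :: "qmat \<Rightarrow> quat" where
  "qmat_trace A = qadd (A 0 0) (qadd (A 1 1) (A 2 2))"

definition qmat_invertible :: "qmat \<Rightarrow> bool" where
  "qmat_invertible A \<longleftrightarrow> (\<exists>B. qmat_eq (qmat_mult A B) qmat_one \<and> qmat_eq (qmat_mult B A) qmat_one)"

definition Sp21 :: "qmat set" where
  "Sp21 = {A. qmat_invertible A \<and> qmat_eq (qmat_mult (qmat_adj A) (qmat_mult I21 A)) I21}"

definition cdet3 :: "(nat \<Rightarrow> nat \<Rightarrow> complex) \<Rightarrow> complex" where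
  "cdet3 M = M 0 0 * (M 1 1 * M 2 2 - M 1 2 * M 2 1)
           - M 0 1 * (M 1 0 * M 2 2 - M 1 2 * M 2 0)
           + M 0 2 * (M 1 0 * M 2 1 - M 1 1 * M 2 0)"

definition SU21 :: "qmat set" where
  "SU21 = {A. (\<forall>i<3. \<forall>j<3. q_is_complex (A i j))
              \<and> cdet3 (\<lambda>i j. Complex (qre (A i j)) (qi (A i j))) = 1
              \<and> qmat_eq (qmat_mult (qmat_adj A) (qmat_mult I21 A)) I21}"

end

theory Submission imports Defs begin

lemma quat_eq_iff: "x = y \<longleftrightarrow> qre x = qre y \<and> qi x = qi y \<and> qj x = qj y \<and> qk x = qk y"
  by (cases x; cases y) auto

instantiation quat :: ring_1
begin
definition "0 = Quat 0 0 0 0"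
definition "1 = Quat 1 0 0 0"
definition "p + q = qadd p q"
definition "- q = Quat (- qre q) (- qi q) (- qj q) (- qk q)"
definition "p - q = qadd p (Quat (- qre q) (- qi q) (- qj q) (- qk q))"
definition "p * q = qmult p q"
instance
  by standard (auto simp: quat_eq_iff zero_quat_def one_quat_def plus_quat_def uminus_quat_def
     minus_quat_def times_quat_def qadd_def qmult_def algebra_simps)
end

lemma qsel_simps[simp]:
  "qre (p + q) = qre p + qre q" "qi (p + q) = qi p + qi q" "qj (p + q) = qj p + qj q" "qk (p + q) = qk p + qk q"
  "qre (p * q) = qre p * qre q - qi p * qi q - qj p * qj q - qk p * qk q"
  "qi (p * q) = qre p * qi q + qi p * qre q + qj p * qk q - qk p * qj q"
  "qj (p * q) = qre p * qj q - qi p * qk q + qj p * qre q + qk p * qi q"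
  "qk (p * q) = qre p * qk q + qi p * qj q - qj p * qi q + qk p * qre q"
  "qre 0 = 0" "qi 0 = 0" "qj 0 = 0" "qk 0 = 0"
  "qre 1 = 1" "qi 1 = 0" "qj 1 = 0" "qk 1 = 0"
  "qre (-p) = - qre p" "qi (-p) = - qi p" "qj (-p) = - qj p" "qk (-p) = - qk p"
  by (simp_all add: zero_quat_def one_quat_def plus_quat_def uminus_quat_def times_quat_def qadd_def qmult_def)

lemma qre_sum: "qre (sum f A) = (\<Sum>x\<in>A. qre (f x))"
  by (induction A rule: infinite_finite_induct) auto

lemma qre_comm: "qre (p * q) = qre (q * p)" by (simp add: algebra_simps)

lemma sum3: "(\<Sum>k<3. f k) = f 0 + f 1 + f (2::nat)"
  by (simp add: eval_nat_numeral add.assoc)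

lemma mult_sum: "qmat_mult A B i j = (\<Sum>k<3. A i k * B k j)"
  by (simp add: qmat_mult_def sum3 plus_quat_def[symmetric] times_quat_def[symmetric] add.assoc)

lemma trace_sum: "qmat_trace A = (\<Sum>k<3. A k k)"
  by (simp add: qmat_trace_def sum3 plus_quat_def[symmetric] add.assoc)


definition mk :: "complex list list \<Rightarrow> qmat" where
  "mk L = (\<lambda>i j. qof_complex (L ! i ! j))"

lemma all3: "(\<forall>i<(3::nat). P i) \<longleftrightarrow> P 0 \<and> P 1 \<and> P 2"
  by (auto simp: eval_nat_numeral less_Suc_eq)

lemma qof_complex_sel[simp]: "qre (qof_complex z) = Re z" "qi (qof_complex z) = Im z"
   "qj (qof_complex z) = 0" "qk (qof_complex z) = 0"
  by (simp_all add: qof_complex_def)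

lemma mkSU:
  assumes "cdet3 (\<lambda>i j. L ! i ! j) = 1"
  and "qmat_eq (qmat_mult (qmat_adj (mk L)) (qmat_mult I21 (mk L))) I21"
  shows "mk L \<in> SU21"
  using assms by (simp add: SU21_def mk_def q_is_complex_def)

lemma "mk [[5/4, 0, (3/4*\<i>)], [0, -1, 0], [(3/4*\<i>), 0, -5/4]] \<in> SU21"
  apply (rule mkSU)
  apply (simp add: cdet3_def complex_eq_iff)
  apply (simp add: qmat_eq_def all3 qmat_mult_def qmat_adj_def I21_def mk_def qadd_def qmult_def qcnj_def qof_real_def quat_eq_iff)
  done

lemma mem0: "mk [[1, 0, 0], [0, 1, 0], [0, 0, 1]] \<in> SU21"
  apply (rule mkSU)
   apply (simp add: cdet3_def complex_eq_iff)
  apply (simp add: qmat_eq_def all3 qmat_mult_def qmat_adj_def I21_def mk_def qadd_def qmult_def qcnj_def qof_real_def quat_eq_iff)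
  done

lemma mem1: "mk [[-1, 0, 0], [0, -1, 0], [0, 0, 1]] \<in> SU21"
  apply (rule mkSU)
   apply (simp add: cdet3_def complex_eq_iff)
  apply (simp add: qmat_eq_def all3 qmat_mult_def qmat_adj_def I21_def mk_def qadd_def qmult_def qcnj_def qof_real_def quat_eq_iff)
  done

lemma mem2: "mk [[-1, 0, 0], [0, 1, 0], [0, 0, -1]] \<in> SU21"
  apply (rule mkSU)
   apply (simp add: cdet3_def complex_eq_iff)
  apply (simp add: qmat_eq_def all3 qmat_mult_def qmat_adj_def I21_def mk_def qadd_def qmult_def qcnj_def qof_real_def quat_eq_iff)
  done

lemma mem3: "mk [[(\<i>), 0, 0], [0, (-\<i>), 0], [0, 0, 1]] \<in> SU21"
  apply (rule mkSU)
   apply (simp add: cdet3_def complex_eq_iff)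
  apply (simp add: qmat_eq_def all3 qmat_mult_def qmat_adj_def I21_def mk_def qadd_def qmult_def qcnj_def qof_real_def quat_eq_iff)
  done

lemma mem4: "mk [[(\<i>), 0, 0], [0, (\<i>), 0], [0, 0, -1]] \<in> SU21"
  apply (rule mkSU)
   apply (simp add: cdet3_def complex_eq_iff)
  apply (simp add: qmat_eq_def all3 qmat_mult_def qmat_adj_def I21_def mk_def qadd_def qmult_def qcnj_def qof_real_def quat_eq_iff)
  done

lemma mem5: "mk [[1, 0, 0], [0, (\<i>), 0], [0, 0, (-\<i>)]] \<in> SU21"
  apply (rule mkSU)
   apply (simp add: cdet3_def complex_eq_iff)
  apply (simp add: qmat_eq_def all3 qmat_mult_def qmat_adj_def I21_def mk_def qadd_def qmult_def qcnj_def qof_real_def quat_eq_iff)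
  done

lemma mem6: "mk [[-1, 0, 0], [0, (\<i>), 0], [0, 0, (\<i>)]] \<in> SU21"
  apply (rule mkSU)
   apply (simp add: cdet3_def complex_eq_iff)
  apply (simp add: qmat_eq_def all3 qmat_mult_def qmat_adj_def I21_def mk_def qadd_def qmult_def qcnj_def qof_real_def quat_eq_iff)
  done

lemma mem7: "mk [[(\<i>), 0, 0], [0, 1, 0], [0, 0, (-\<i>)]] \<in> SU21"
  apply (rule mkSU)
   apply (simp add: cdet3_def complex_eq_iff)
  apply (simp add: qmat_eq_def all3 qmat_mult_def qmat_adj_def I21_def mk_def qadd_def qmult_def qcnj_def qof_real_def quat_eq_iff)
  done

lemma mem8: "mk [[0, 1, 0], [-1, 0, 0], [0, 0, 1]] \<in> SU21"
  apply (rule mkSU)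
   apply (simp add: cdet3_def complex_eq_iff)
  apply (simp add: qmat_eq_def all3 qmat_mult_def qmat_adj_def I21_def mk_def qadd_def qmult_def qcnj_def qof_real_def quat_eq_iff)
  done

lemma mem9: "mk [[0, (\<i>), 0], [(\<i>), 0, 0], [0, 0, 1]] \<in> SU21"
  apply (rule mkSU)
   apply (simp add: cdet3_def complex_eq_iff)
  apply (simp add: qmat_eq_def all3 qmat_mult_def qmat_adj_def I21_def mk_def qadd_def qmult_def qcnj_def qof_real_def quat_eq_iff)
  done

lemma mem10: "mk [[0, 1, 0], [1, 0, 0], [0, 0, -1]] \<in> SU21"
  apply (rule mkSU)
   apply (simp add: cdet3_def complex_eq_iff)
  apply (simp add: qmat_eq_def all3 qmat_mult_def qmat_adj_def I21_def mk_def qadd_def qmult_def qcnj_def qof_real_def quat_eq_iff)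
  done

lemma mem11: "mk [[0, (\<i>), 0], [(-\<i>), 0, 0], [0, 0, -1]] \<in> SU21"
  apply (rule mkSU)
   apply (simp add: cdet3_def complex_eq_iff)
  apply (simp add: qmat_eq_def all3 qmat_mult_def qmat_adj_def I21_def mk_def qadd_def qmult_def qcnj_def qof_real_def quat_eq_iff)
  done

lemma mem12: "mk [[5/4, 0, 3/4], [0, 1, 0], [3/4, 0, 5/4]] \<in> SU21"
  apply (rule mkSU)
   apply (simp add: cdet3_def complex_eq_iff)
  apply (simp add: qmat_eq_def all3 qmat_mult_def qmat_adj_def I21_def mk_def qadd_def qmult_def qcnj_def qof_real_def quat_eq_iff)
  done

lemma mem13: "mk [[5/4, 0, 3/4], [0, -1, 0], [-3/4, 0, -5/4]] \<in> SU21"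
  apply (rule mkSU)
   apply (simp add: cdet3_def complex_eq_iff)
  apply (simp add: qmat_eq_def all3 qmat_mult_def qmat_adj_def I21_def mk_def qadd_def qmult_def qcnj_def qof_real_def quat_eq_iff)
  done

lemma mem14: "mk [[5/4, 0, (3/4*\<i>)], [0, 1, 0], [(-3/4*\<i>), 0, 5/4]] \<in> SU21"
  apply (rule mkSU)
   apply (simp add: cdet3_def complex_eq_iff)
  apply (simp add: qmat_eq_def all3 qmat_mult_def qmat_adj_def I21_def mk_def qadd_def qmult_def qcnj_def qof_real_def quat_eq_iff)
  done

lemma mem15: "mk [[5/4, 0, (3/4*\<i>)], [0, -1, 0], [(3/4*\<i>), 0, -5/4]] \<in> SU21"
  apply (rule mkSU)
   apply (simp add: cdet3_def complex_eq_iff)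
  apply (simp add: qmat_eq_def all3 qmat_mult_def qmat_adj_def I21_def mk_def qadd_def qmult_def qcnj_def qof_real_def quat_eq_iff)
  done

lemma mem16: "mk [[1, 0, 0], [0, 5/4, 3/4], [0, 3/4, 5/4]] \<in> SU21"
  apply (rule mkSU)
   apply (simp add: cdet3_def complex_eq_iff)
  apply (simp add: qmat_eq_def all3 qmat_mult_def qmat_adj_def I21_def mk_def qadd_def qmult_def qcnj_def qof_real_def quat_eq_iff)
  done

lemma mem17: "mk [[-1, 0, 0], [0, 5/4, 3/4], [0, -3/4, -5/4]] \<in> SU21"
  apply (rule mkSU)
   apply (simp add: cdet3_def complex_eq_iff)
  apply (simp add: qmat_eq_def all3 qmat_mult_def qmat_adj_def I21_def mk_def qadd_def qmult_def qcnj_def qof_real_def quat_eq_iff)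
  done

lemma mem18: "mk [[1, 0, 0], [0, 5/4, (3/4*\<i>)], [0, (-3/4*\<i>), 5/4]] \<in> SU21"
  apply (rule mkSU)
   apply (simp add: cdet3_def complex_eq_iff)
  apply (simp add: qmat_eq_def all3 qmat_mult_def qmat_adj_def I21_def mk_def qadd_def qmult_def qcnj_def qof_real_def quat_eq_iff)
  done

lemma mem19: "mk [[-1, 0, 0], [0, 5/4, (3/4*\<i>)], [0, (3/4*\<i>), -5/4]] \<in> SU21"
  apply (rule mkSU)
   apply (simp add: cdet3_def complex_eq_iff)
  apply (simp add: qmat_eq_def all3 qmat_mult_def qmat_adj_def I21_def mk_def qadd_def qmult_def qcnj_def qof_real_def quat_eq_iff)
  done

lemma span:
  assumes h: "\<And>A. A \<in> SU21 \<Longrightarrow> (\<Sum>k<3. \<Sum>j<3. qre (V k j * A j k)) = 0"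
  shows "\<forall>k<3. \<forall>j<3. qre (V k j) = 0 \<and> qi (V k j) = 0"
proof -
  have e0: "(\<Sum>k<3. \<Sum>j<3. qre (V k j * mk [[1, 0, 0], [0, 1, 0], [0, 0, 1]] j k)) = 0" by (rule h[OF mem0])
  have e1: "(\<Sum>k<3. \<Sum>j<3. qre (V k j * mk [[-1, 0, 0], [0, -1, 0], [0, 0, 1]] j k)) = 0" by (rule h[OF mem1])
  have e2: "(\<Sum>k<3. \<Sum>j<3. qre (V k j * mk [[-1, 0, 0], [0, 1, 0], [0, 0, -1]] j k)) = 0" by (rule h[OF mem2])
  have e3: "(\<Sum>k<3. \<Sum>j<3. qre (V k j * mk [[(\<i>), 0, 0], [0, (-\<i>), 0], [0, 0, 1]] j k)) = 0" by (rule h[OF mem3])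
  have e4: "(\<Sum>k<3. \<Sum>j<3. qre (V k j * mk [[(\<i>), 0, 0], [0, (\<i>), 0], [0, 0, -1]] j k)) = 0" by (rule h[OF mem4])
  have e5: "(\<Sum>k<3. \<Sum>j<3. qre (V k j * mk [[1, 0, 0], [0, (\<i>), 0], [0, 0, (-\<i>)]] j k)) = 0" by (rule h[OF mem5])
  have e6: "(\<Sum>k<3. \<Sum>j<3. qre (V k j * mk [[-1, 0, 0], [0, (\<i>), 0], [0, 0, (\<i>)]] j k)) = 0" by (rule h[OF mem6])
  have e7: "(\<Sum>k<3. \<Sum>j<3. qre (V k j * mk [[(\<i>), 0, 0], [0, 1, 0], [0, 0, (-\<i>)]] j k)) = 0" by (rule h[OF mem7])
  have e8: "(\<Sum>k<3. \<Sum>j<3. qre (V k j * mk [[0, 1, 0], [-1, 0, 0], [0, 0, 1]] j k)) = 0" by (rule h[OF mem8])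
  have e9: "(\<Sum>k<3. \<Sum>j<3. qre (V k j * mk [[0, (\<i>), 0], [(\<i>), 0, 0], [0, 0, 1]] j k)) = 0" by (rule h[OF mem9])
  have e10: "(\<Sum>k<3. \<Sum>j<3. qre (V k j * mk [[0, 1, 0], [1, 0, 0], [0, 0, -1]] j k)) = 0" by (rule h[OF mem10])
  have e11: "(\<Sum>k<3. \<Sum>j<3. qre (V k j * mk [[0, (\<i>), 0], [(-\<i>), 0, 0], [0, 0, -1]] j k)) = 0" by (rule h[OF mem11])
  have e12: "(\<Sum>k<3. \<Sum>j<3. qre (V k j * mk [[5/4, 0, 3/4], [0, 1, 0], [3/4, 0, 5/4]] j k)) = 0" by (rule h[OF mem12])
  have e13: "(\<Sum>k<3. \<Sum>j<3. qre (V k j * mk [[5/4, 0, 3/4], [0, -1, 0], [-3/4, 0, -5/4]] j k)) = 0" by (rule h[OF mem13])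
  have e14: "(\<Sum>k<3. \<Sum>j<3. qre (V k j * mk [[5/4, 0, (3/4*\<i>)], [0, 1, 0], [(-3/4*\<i>), 0, 5/4]] j k)) = 0" by (rule h[OF mem14])
  have e15: "(\<Sum>k<3. \<Sum>j<3. qre (V k j * mk [[5/4, 0, (3/4*\<i>)], [0, -1, 0], [(3/4*\<i>), 0, -5/4]] j k)) = 0" by (rule h[OF mem15])
  have e16: "(\<Sum>k<3. \<Sum>j<3. qre (V k j * mk [[1, 0, 0], [0, 5/4, 3/4], [0, 3/4, 5/4]] j k)) = 0" by (rule h[OF mem16])
  have e17: "(\<Sum>k<3. \<Sum>j<3. qre (V k j * mk [[-1, 0, 0], [0, 5/4, 3/4], [0, -3/4, -5/4]] j k)) = 0" by (rule h[OF mem17])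
  have e18: "(\<Sum>k<3. \<Sum>j<3. qre (V k j * mk [[1, 0, 0], [0, 5/4, (3/4*\<i>)], [0, (-3/4*\<i>), 5/4]] j k)) = 0" by (rule h[OF mem18])
  have e19: "(\<Sum>k<3. \<Sum>j<3. qre (V k j * mk [[-1, 0, 0], [0, 5/4, (3/4*\<i>)], [0, (3/4*\<i>), -5/4]] j k)) = 0" by (rule h[OF mem19])
  note es = e0 e1 e2 e3 e4 e5 e6 e7 e8 e9 e10 e11 e12 e13 e14 e15 e16 e17 e18 e19
  show ?thesis unfolding all3 using es
    by (simp add: sum3 mk_def)
qed

definition UU :: "qmat \<Rightarrow> qmat \<Rightarrow> quat \<Rightarrow> qmat" where
  "UU g ginv u = (\<lambda>i j. \<Sum>k<3. ginv i k * u * g k j)"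

lemma cyc:
  "qre (u * qmat_trace (qmat_mult g (qmat_mult A ginv))) = (\<Sum>k<3. \<Sum>j<3. qre (UU g ginv u k j * A j k))"
proof -
  have "qre (u * qmat_trace (qmat_mult g (qmat_mult A ginv)))
      = (\<Sum>i<3. \<Sum>j<3. \<Sum>k<3. qre (u * g i j * A j k * ginv k i))"
    by (simp add: trace_sum mult_sum sum_distrib_left qre_sum mult.assoc)
  also have "\<dots> = (\<Sum>i<3. \<Sum>j<3. \<Sum>k<3. qre (ginv k i * u * g i j * A j k))"
    by (rule sum.cong[OF refl])+ (metis qre_comm mult.assoc)
  also have "\<dots> = (\<Sum>k<3. \<Sum>j<3. \<Sum>i<3. qre (ginv k i * u * g i j * A j k))"
    by (subst sum.swap) (subst (2) sum.swap, subst sum.swap, simp)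
  also have "\<dots> = (\<Sum>k<3. \<Sum>j<3. qre (UU g ginv u k j * A j k))"
    by (simp add: UU_def sum_distrib_right qre_sum)
  finally show ?thesis .
qed


lemma UU_mult:
  assumes gg: "qmat_eq (qmat_mult g ginv) qmat_one"
  shows "(\<Sum>l<3. UU g ginv u i l * UU g ginv v l j) = UU g ginv (u * v) i j"
proof -
  have d: "(\<Sum>l<3. g k l * ginv l m) = (if k = m then 1 else 0)" if "k < 3" "m < 3" for k m
    using gg that by (auto simp: qmat_eq_def mult_sum[symmetric] qmat_one_def qof_real_def
        zero_quat_def one_quat_def)
  have "(\<Sum>l<3. UU g ginv u i l * UU g ginv v l j)
     = (\<Sum>l<3. \<Sum>k<3. \<Sum>m<3. (ginv i k * u) * (g k l * ginv l m) * (v * g m j))"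
    by (simp add: UU_def sum_distrib_left sum_distrib_right mult.assoc; rule sum.cong[OF refl]; rule sum.swap)
  also have "\<dots> = (\<Sum>k<3. \<Sum>m<3. \<Sum>l<3. (ginv i k * u) * (g k l * ginv l m) * (v * g m j))"
    by (subst sum.swap) (subst (2) sum.swap, simp)
  also have "\<dots> = (\<Sum>k<3. \<Sum>m<3. (ginv i k * u) * (\<Sum>l<3. g k l * ginv l m) * (v * g m j))"
    by (simp add: sum_distrib_left sum_distrib_right)
  also have "\<dots> = (\<Sum>k<3. \<Sum>m<3. (ginv i k * u) * (if k = m then 1 else 0) * (v * g m j))"
    by (rule sum.cong[OF refl])+ (simp add: d)
  also have "\<dots> = (\<Sum>k<3. (ginv i k * u) * (v * g k j))"
    by (simp add: sum3)
  also have "\<dots> = UU g ginv (u * v) i j"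
    by (simp add: UU_def mult.assoc)
  finally show ?thesis .
qed

theorem lemma4p7:
  assumes "g \<in> Sp21"
    and "qmat_eq (qmat_mult g ginv) qmat_one"
    and "qmat_eq (qmat_mult ginv g) qmat_one"
  shows "\<exists>A\<in>SU21. \<not> q_is_real (qmat_trace (qmat_mult g (qmat_mult A ginv)))"
proof (rule ccontr)
  assume "\<not> ?thesis"
  hence R: "\<And>A. A \<in> SU21 \<Longrightarrow> q_is_real (qmat_trace (qmat_mult g (qmat_mult A ginv)))" by blast
  define qI where "qI = Quat 0 1 0 0"
  define qJ where "qJ = Quat 0 0 1 0"
  define qK where "qK = Quat 0 0 0 1"
  have Z: "\<forall>k<3. \<forall>j<3. qre (UU g ginv u k j) = 0 \<and> qi (UU g ginv u k j) = 0"
    if u: "u = qI \<or> u = qJ \<or> u = qK" for u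
  proof (rule span)
    fix A assume "A \<in> SU21"
    then obtain r where "qmat_trace (qmat_mult g (qmat_mult A ginv)) = qof_real r"
      using R unfolding q_is_real_def by blast
    hence "qre (u * qmat_trace (qmat_mult g (qmat_mult A ginv))) = 0"
      using u by (auto simp: qI_def qJ_def qK_def qof_real_def)
    thus "(\<Sum>k<3. \<Sum>j<3. qre (UU g ginv u k j * A j k)) = 0" by (metis cyc)
  qed
  have ZI: "\<forall>k<3. \<forall>j<3. qre (UU g ginv qI k j) = 0 \<and> qi (UU g ginv qI k j) = 0" using Z by blast
  have ZJ: "\<forall>k<3. \<forall>j<3. qre (UU g ginv qJ k j) = 0 \<and> qi (UU g ginv qJ k j) = 0" using Z by blast
  have ZK: "\<forall>k<3. \<forall>j<3. qre (UU g ginv qK k j) = 0 \<and> qi (UU g ginv qK k j) = 0" using Z by blast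
  have IJ: "qI * qJ = qK" by (simp add: quat_eq_iff qI_def qJ_def qK_def)
  have KK: "qK * qK = -1" by (simp add: quat_eq_iff qK_def)
  have K0: "UU g ginv qK i j = 0" if "i < 3" "j < 3" for i j
  proof -
    have "UU g ginv qK i j = (\<Sum>l<3. UU g ginv qI i l * UU g ginv qJ l j)"
      using UU_mult[OF assms(2)] IJ by simp
    moreover have "qj (\<Sum>l<3. UU g ginv qI i l * UU g ginv qJ l j) = 0"
       "qk (\<Sum>l<3. UU g ginv qI i l * UU g ginv qJ l j) = 0"
    proof -
      have "\<forall>l<3. qre (UU g ginv qI i l) = 0 \<and> qi (UU g ginv qI i l) = 0 \<and>
             qre (UU g ginv qJ l j) = 0 \<and> qi (UU g ginv qJ l j) = 0"
        using ZI ZJ that by auto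
      thus "qj (\<Sum>l<3. UU g ginv qI i l * UU g ginv qJ l j) = 0"
       "qk (\<Sum>l<3. UU g ginv qI i l * UU g ginv qJ l j) = 0"
        by (simp_all add: sum3 all3)
    qed
    ultimately show ?thesis using ZK that by (simp add: quat_eq_iff)
  qed
  have "UU g ginv (qK * qK) 0 0 = 0"
    using UU_mult[OF assms(2), of qK 0 qK 0, symmetric] K0 by (simp add: sum3)
  moreover have "UU g ginv (qK * qK) 0 0 = - 1"
  proof -
    have "(\<Sum>k<3. ginv 0 k * g k 0) = 1"
      using assms(3) by (auto simp: qmat_eq_def mult_sum[symmetric] qmat_one_def qof_real_def one_quat_def)
    thus ?thesis by (simp add: KK UU_def sum_negf)
  qed
  ultimately show False by (simp add: quat_eq_iff)
qed

end
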